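(* Let $0<\varepsilon<1$ and let $E^1=\{uv: \varepsilon w_v<w_u<w_v/\varepsilon\}$ (unordered pairs, $u=v$ allowed) and $N^1_u=\{v\in V: uv\in E^1\}$. Let $\mathcal C'$ be any clustering of $V$ that does not split any atom and such that for every $u\in V$ and every $C\in\mathcal C'$ with $K_u\subsetneq C$ we have $w(u,C)>\frac{|C|}2+\varepsilon w_u$. Then for every $C\in\mathcal C'$ and any $u,v\in C$ with $v\notin K_u$, $$\sum_{p\in N^1_u\cap N^1_v}w_{up}w_{vp}>\varepsilon(w_u+w_v).$$
   Context: A Correlation Clustering instance consists of a finite vertex set $V$ and a partition $E^+\uplus E^-=\binom V2$ of unordered pairs of distinct vertices into $+$edges and $-$edges. $\mathcal K$ is a partition of $V$ into atoms, and every pair of distinct vertices in a common atom is a $+$edge. For $u\in V$, $K_u$ is the atom containing $u$ and $k_u=|K_u|$. For $u,v\in V$ (possibly equal), $w_{uv}=\frac1{k_uk_v}\sum_{u'\in K_u,v'\in K_v}\mathbf 1[u'v'\text{ is a }+\text{edge or }u'=v']\in[0,1]$; for $V'\subseteq V$, $w(u,V')=\sum_{v\in V'}w_{uv}$, and $w_u=w(u,V)$. *)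

theory Defs
  imports Complex_Main "HOL-Library.Disjoint_Sets"
begin

text \<open>A Correlation Clustering instance: finite vertex set V, set Ep of +edges
(unordered pairs {u,v} of distinct vertices of V); all other pairs are -edges.\<close>

definition cc_instance :: "'a set \<Rightarrow> 'a set set \<Rightarrow> 'a set set \<Rightarrow> bool" where
  "cc_instance V Ep Katoms \<longleftrightarrow>
     finite V \<and>
     Ep \<subseteq> {{x, y} | x y. x \<in> V \<and> y \<in> V \<and> x \<noteq> y} \<and>
     partition_on V Katoms \<and>
     (\<forall>A\<in>Katoms. \<forall>x\<in>A. \<forall>y\<in>A. x \<noteq> y \<longrightarrow> {x, y} \<in> Ep)"

definition atom_of :: "'a set set \<Rightarrow> 'a \<Rightarrow> 'a set" where
  "atom_of Katoms u = (THE A. A \<in> Katoms \<and> u \<in> A)"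

definition wgt :: "'a set set \<Rightarrow> 'a set set \<Rightarrow> 'a \<Rightarrow> 'a \<Rightarrow> real" where
  "wgt Ep Katoms u v =
     (1 / (real (card (atom_of Katoms u)) * real (card (atom_of Katoms v)))) *
     (\<Sum>u'\<in>atom_of Katoms u. \<Sum>v'\<in>atom_of Katoms v.
        (if {u', v'} \<in> Ep \<or> u' = v' then 1 else 0))"

definition wset :: "'a set set \<Rightarrow> 'a set set \<Rightarrow> 'a \<Rightarrow> 'a set \<Rightarrow> real" where
  "wset Ep Katoms u V' = (\<Sum>v\<in>V'. wgt Ep Katoms u v)"

definition wdeg :: "'a set \<Rightarrow> 'a set set \<Rightarrow> 'a set set \<Rightarrow> 'a \<Rightarrow> real" where
  "wdeg V Ep Katoms u = wset Ep Katoms u V"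

definition N1 :: "real \<Rightarrow> 'a set \<Rightarrow> 'a set set \<Rightarrow> 'a set set \<Rightarrow> 'a \<Rightarrow> 'a set" where
  "N1 eps V Ep Katoms u = {v \<in> V. eps * wdeg V Ep Katoms v < wdeg V Ep Katoms u \<and>
                                   wdeg V Ep Katoms u < wdeg V Ep Katoms v / eps}"

end

theory Submission
  imports Defs
begin

lemma atom_of_eq:
  assumes P: "partition_on V Katoms" and A: "A \<in> Katoms" and x: "x \<in> A"
  shows "atom_of Katoms x = A"
  unfolding atom_of_def
proof (rule the_equality)
  show "A \<in> Katoms \<and> x \<in> A" using A x by simp
next
  fix B assume "B \<in> Katoms \<and> x \<in> B"
  then show "B = A" using P A x unfolding partition_on_def disjoint_def by blast
qed

lemma atom_of_mem:
  assumes P: "partition_on V Katoms" and x: "x \<in> V"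
  shows "atom_of Katoms x \<in> Katoms \<and> x \<in> atom_of Katoms x"
proof -
  obtain A where "A \<in> Katoms" "x \<in> A" using P x unfolding partition_on_def by blast
  then show ?thesis using atom_of_eq[OF P] by simp
qed

lemma wgt_bounds:
  assumes inst: "cc_instance V Ep Katoms" and u: "u \<in> V" and v: "v \<in> V"
  shows "0 \<le> wgt Ep Katoms u v \<and> wgt Ep Katoms u v \<le> 1"
proof -
  have P: "partition_on V Katoms" and fin: "finite V" using inst unfolding cc_instance_def by auto
  let ?A = "atom_of Katoms u" and ?B = "atom_of Katoms v"
  have A: "?A \<in> Katoms" "u \<in> ?A" and B: "?B \<in> Katoms" "v \<in> ?B"
    using atom_of_mem[OF P u] atom_of_mem[OF P v] by auto
  have "?A \<subseteq> V" "?B \<subseteq> V" using A B P unfolding partition_on_def by auto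
  then have fA: "finite ?A" and fB: "finite ?B" using fin finite_subset by auto
  have cA: "card ?A > 0" and cB: "card ?B > 0" using fA fB A B card_gt_0_iff by blast+
  let ?S = "(\<Sum>u'\<in>?A. \<Sum>v'\<in>?B. (if {u', v'} \<in> Ep \<or> u' = v' then 1 else 0::real))"
  have S0: "0 \<le> ?S" by (intro sum_nonneg) auto
  have "?S \<le> (\<Sum>u'\<in>?A. \<Sum>v'\<in>?B. (1::real))" by (intro sum_mono) auto
  also have "\<dots> = real (card ?A) * real (card ?B)" by simp
  finally have S1: "?S \<le> real (card ?A) * real (card ?B)" .
  have pos: "real (card ?A) * real (card ?B) > 0" using cA cB by simp
  show ?thesis unfolding wgt_def using S0 S1 pos
    by (simp add: divide_simps)
qed

theorem lemma11:
  fixes V :: "'a set" and Ep Katoms Cl :: "'a set set" and eps :: real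
  assumes inst: "cc_instance V Ep Katoms"
    and eps: "0 < eps" "eps < 1"
    and clust: "partition_on V Cl"
    and nosplit: "\<forall>A\<in>Katoms. \<exists>C\<in>Cl. A \<subseteq> C"
    and heavy: "\<forall>u\<in>V. \<forall>C\<in>Cl. atom_of Katoms u \<subset> C \<longrightarrow>
                   wset Ep Katoms u C > real (card C) / 2 + eps * wdeg V Ep Katoms u"
    and C: "C \<in> Cl" and u: "u \<in> C" and v: "v \<in> C" and vu: "v \<notin> atom_of Katoms u"
  shows "(\<Sum>p\<in>N1 eps V Ep Katoms u \<inter> N1 eps V Ep Katoms v.
            wgt Ep Katoms u p * wgt Ep Katoms v p)
         > eps * (wdeg V Ep Katoms u + wdeg V Ep Katoms v)"
proof -
  have P: "partition_on V Katoms" and fin: "finite V" using inst unfolding cc_instance_def by auto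
  have CV: "C \<subseteq> V" using clust C unfolding partition_on_def by auto
  have finC: "finite C" using CV fin finite_subset by auto
  have uV: "u \<in> V" and vV: "v \<in> V" using u v CV by auto
  have Ksub: "atom_of Katoms p \<subseteq> C" if p: "p \<in> C" for p
  proof -
    have pV: "p \<in> V" using p CV by auto
    obtain C' where C': "C' \<in> Cl" "atom_of Katoms p \<subseteq> C'"
      using nosplit atom_of_mem[OF P pV] by blast
    have "p \<in> C'" using C' atom_of_mem[OF P pV] by auto
    then have "C' = C" using C' C p clust unfolding partition_on_def disjoint_def by blast
    then show ?thesis using C' by simp
  qed
  have Kpsub: "atom_of Katoms p \<subset> C" if p: "p \<in> C" for p
  proof (cases "p \<in> atom_of Katoms u")
    case True
    have "atom_of Katoms p = atom_of Katoms u"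
      using atom_of_eq[OF P _ True] atom_of_mem[OF P uV] by simp
    then show ?thesis using Ksub[OF p] vu v by auto
  next
    case False
    have pV: "p \<in> V" using p CV by auto
    have "u \<notin> atom_of Katoms p"
    proof
      assume "u \<in> atom_of Katoms p"
      then have "atom_of Katoms u = atom_of Katoms p"
        using atom_of_eq[OF P _ ] atom_of_mem[OF P pV] by blast
      then show False using False atom_of_mem[OF P pV] by simp
    qed
    then show ?thesis using Ksub[OF p] u by auto
  qed
  have wle1: "wset Ep Katoms p C \<le> real (card C)" if p: "p \<in> V" for p
  proof -
    have "wset Ep Katoms p C \<le> (\<Sum>q\<in>C. 1)" unfolding wset_def
      using wgt_bounds[OF inst p] CV by (intro sum_mono) auto
    then show ?thesis by simp
  qed
  have wledeg: "wset Ep Katoms p C \<le> wdeg V Ep Katoms p" if p: "p \<in> V" for p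
    unfolding wdeg_def wset_def
    using wgt_bounds[OF inst p] CV fin by (intro sum_mono2) auto
  have key: "eps * wdeg V Ep Katoms p < real (card C) / 2 \<and> real (card C) / 2 < wdeg V Ep Katoms p"
    if p: "p \<in> C" for p
  proof -
    have pV: "p \<in> V" using p CV by auto
    have h: "wset Ep Katoms p C > real (card C) / 2 + eps * wdeg V Ep Katoms p"
      using heavy pV C Kpsub[OF p] by blast
    have "0 \<le> wdeg V Ep Katoms p" unfolding wdeg_def wset_def
      using wgt_bounds[OF inst pV] by (intro sum_nonneg) auto
    then have "0 \<le> eps * wdeg V Ep Katoms p" using eps by simp
    then show ?thesis using h wle1[OF pV] wledeg[OF pV] by linarith
  qed
  have CN: "C \<subseteq> N1 eps V Ep Katoms u \<inter> N1 eps V Ep Katoms v"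
  proof
    fix p assume p: "p \<in> C"
    have "p \<in> V" using p CV by auto
    then show "p \<in> N1 eps V Ep Katoms u \<inter> N1 eps V Ep Katoms v"
      unfolding N1_def using key[OF p] key[OF u] key[OF v] eps
      by (auto simp: less_divide_eq mult.commute)
  qed
  have hu: "wset Ep Katoms u C > real (card C) / 2 + eps * wdeg V Ep Katoms u"
    using heavy uV C Kpsub[OF u] by blast
  have hv: "wset Ep Katoms v C > real (card C) / 2 + eps * wdeg V Ep Katoms v"
    using heavy vV C Kpsub[OF v] by blast
  have "eps * (wdeg V Ep Katoms u + wdeg V Ep Katoms v)
        < wset Ep Katoms u C + wset Ep Katoms v C - real (card C)"
    using hu hv by (simp add: algebra_simps)
  also have "\<dots> = (\<Sum>p\<in>C. wgt Ep Katoms u p + wgt Ep Katoms v p - 1)"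
    unfolding wset_def by (simp add: sum.distrib sum_subtractf)
  also have "\<dots> \<le> (\<Sum>p\<in>C. wgt Ep Katoms u p * wgt Ep Katoms v p)"
  proof (rule sum_mono)
    fix p assume p: "p \<in> C"
    then have pV: "p \<in> V" using CV by auto
    have a: "0 \<le> wgt Ep Katoms u p" "wgt Ep Katoms u p \<le> 1" using wgt_bounds[OF inst uV pV] by auto
    have b: "0 \<le> wgt Ep Katoms v p" "wgt Ep Katoms v p \<le> 1" using wgt_bounds[OF inst vV pV] by auto
    have "0 \<le> (1 - wgt Ep Katoms u p) * (1 - wgt Ep Katoms v p)" using a b by simp
    then show "wgt Ep Katoms u p + wgt Ep Katoms v p - 1 \<le> wgt Ep Katoms u p * wgt Ep Katoms v p"
      by (simp add: algebra_simps)
  qed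
  also have "\<dots> \<le> (\<Sum>p\<in>N1 eps V Ep Katoms u \<inter> N1 eps V Ep Katoms v.
            wgt Ep Katoms u p * wgt Ep Katoms v p)"
  proof (rule sum_mono2)
    show "finite (N1 eps V Ep Katoms u \<inter> N1 eps V Ep Katoms v)"
      using fin unfolding N1_def by auto
    show "C \<subseteq> N1 eps V Ep Katoms u \<inter> N1 eps V Ep Katoms v" by (rule CN)
    fix p assume "p \<in> N1 eps V Ep Katoms u \<inter> N1 eps V Ep Katoms v - C"
    then have pV: "p \<in> V" unfolding N1_def by auto
    show "0 \<le> wgt Ep Katoms u p * wgt Ep Katoms v p"
      using wgt_bounds[OF inst uV pV] wgt_bounds[OF inst vV pV] by simp
  qed
  finally show ?thesis .
qed

end
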